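(* Any surface $S$ of the class $\Gamma$ has the following properties: $1)$ the parametric lines are principal lines; $2)$ the family $\mathcal F_1$ of $u$-lines ($v=\mathrm{const}$) consists of geodesics.
   Context: Let $c_2: x=x(v),\ v\in J_2$, be a smooth regular curve in Euclidean space $\mathbb R^3$ parameterized by arc length, with unit tangent $t(v)$, principal normal $n(v)$, binormal $b(v)$, curvature $\kappa(v)>0$ and torsion $\tau(v)$. Put $\theta(v)=-\int_0^v\tau\,dv$ and $e_1=\cos\theta\, n+\sin\theta\, b$, $e_2=-\sin\theta\, n+\cos\theta\, b$ (an orthonormal pair of torse-forming normals along $c_2$, i.e. $e_i'$ is proportional to $t$). Let $\lambda(u),\mu(u)$, $u\in J_1$, be functions with $\dot\lambda^2+\dot\mu^2=1$, $\lambda(0)=\mu(0)=0$, $\dot\lambda(0)=1$, $\dot\mu(0)=0$, so that $u\mapsto(\lambda(u),\mu(u))$ is a plane curve $c_1$ parameterized by arc length with plane curvature $\kappa_1(u)\neq 0$. Consider the surface $S: Z(u,v)=x(v)+\lambda(u)e_1(v)+\mu(u)e_2(v)$, $u\in J_1$, $v\in J_2$, at the points where $\lambda\cos\theta-\mu\sin\theta\neq 1/\kappa$, oriented by the unit normal $l=-\dot\mu\, e_1+\dot\lambda\, e_2$. The class $\Gamma$ is the class of all such surfaces. A family of parametric lines is called principal if its lines are lines of curvature; $\mathcal F_1$ denotes the family of $u$-parameter lines and $\mathcal F_2$ the family of $v$-parameter lines. *)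

theory Defs
  imports "HOL-Analysis.Analysis"
begin

text \<open>Oriented integral from a to b (so that theta v = - int_0^v tau also for v < 0).\<close>
definition oint :: "real \<Rightarrow> real \<Rightarrow> (real \<Rightarrow> real) \<Rightarrow> real" where
  "oint a b f = (if a \<le> b then integral {a..b} f else - integral {b..a} f)"

text \<open>The u-parameter line through (u,v) of the surface Z with unit normal field N is a
  line of curvature at (u,v): its tangent Z_u is a principal direction, i.e. (Rodrigues /
  Weingarten) the derivative of the normal along the line is a multiple of Z_u.\<close>
definition curvature_line_u ::
  "(real \<Rightarrow> real \<Rightarrow> real^3) \<Rightarrow> (real \<Rightarrow> real \<Rightarrow> real^3) \<Rightarrow> real \<Rightarrow> real \<Rightarrow> bool" where
  "curvature_line_u Z N u v \<longleftrightarrow>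
     (\<exists>Zu Nu k. ((\<lambda>s. Z s v) has_vector_derivative Zu) (at u)
              \<and> ((\<lambda>s. N s v) has_vector_derivative Nu) (at u)
              \<and> Nu = k *\<^sub>R Zu)"

definition curvature_line_v ::
  "(real \<Rightarrow> real \<Rightarrow> real^3) \<Rightarrow> (real \<Rightarrow> real \<Rightarrow> real^3) \<Rightarrow> real \<Rightarrow> real \<Rightarrow> bool" where
  "curvature_line_v Z N u v \<longleftrightarrow>
     (\<exists>Zv Nv k. ((\<lambda>s. Z u s) has_vector_derivative Zv) (at v)
              \<and> ((\<lambda>s. N u s) has_vector_derivative Nv) (at v)
              \<and> Nv = k *\<^sub>R Zv)"

text \<open>The u-parameter line through (u,v) is geodesic at (u,v): it is twice differentiable
  there and its geodesic curvature vanishes, i.e. det(N, Z_u, Z_uu) = (N x Z_u) . Z_uu = 0.\<close>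
definition geodesic_line_u ::
  "(real \<Rightarrow> real \<Rightarrow> real^3) \<Rightarrow> (real \<Rightarrow> real \<Rightarrow> real^3) \<Rightarrow> real \<Rightarrow> real \<Rightarrow> bool" where
  "geodesic_line_u Z N u v \<longleftrightarrow>
     (\<exists>Zu Zuu. (\<forall>\<^sub>F s in nhds u. ((\<lambda>r. Z r v) has_vector_derivative Zu s) (at s))
             \<and> (Zu has_vector_derivative Zuu) (at u)
             \<and> (cross3 (N u v) (Zu u)) \<bullet> Zuu = 0)"

end

theory Submission
  imports Defs
begin

lemma cross_cross_l: "cross3 (cross3 a b) c = (a \<bullet> c) *\<^sub>R b - (b \<bullet> c) *\<^sub>R a"
  for a b c :: "real^3"
  unfolding vec_eq_iff forall_3 cross3_def inner_vec_def sum_3 vector_def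
  by (simp add: algebra_simps)

lemma triple0: "(cross3 (a *\<^sub>R p + b *\<^sub>R q) (c *\<^sub>R p + d *\<^sub>R q)) \<bullet> (e *\<^sub>R p + f *\<^sub>R q) = 0"
  for p q :: "real^3"
  by (simp add: cross_add_left cross_add_right cross_mult_left cross_mult_right
      inner_add_left inner_add_right dot_cross_self)

lemma hvd_cmul:
  "(f has_vector_derivative f') F \<Longrightarrow> ((\<lambda>x. c *\<^sub>R f x) has_vector_derivative c *\<^sub>R f') F"
  by (rule bounded_linear.has_vector_derivative[OF bounded_linear_scaleR_right])

lemma bb_cross: "bounded_bilinear (cross3 :: real^3 \<Rightarrow> real^3 \<Rightarrow> real^3)"
  using bilinear_cross bilinear_conv_bounded_bilinear by blast

lemma deriv_const_open:
  assumes "(f has_real_derivative D) (at v)" "open S" "v \<in> S" "\<And>w. w \<in> S \<Longrightarrow> f w = c"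
  shows "D = 0"
proof -
  have "((\<lambda>_. c) has_real_derivative 0) (at v)" by simp
  then have "(f has_real_derivative 0) (at v)"
    by (rule has_field_derivative_transform_within_open[OF _ assms(2,3)]) (simp add: assms(4))
  then show ?thesis using assms(1) DERIV_unique by blast
qed

lemma oint_deriv:
  assumes J: "open J" "is_interval J" "0 \<in> J" and c: "continuous_on J \<tau>" and v: "v \<in> J"
  shows "((\<lambda>w. oint 0 w \<tau>) has_real_derivative \<tau> v) (at v)"
proof -
  obtain e0 where e0: "e0 > 0" "ball 0 e0 \<subseteq> J" using openE[OF J(1) J(3)] by blast
  obtain e1 where e1: "e1 > 0" "ball v e1 \<subseteq> J" using openE[OF J(1) v] by blast
  define e where "e = min e0 e1"
  define a where "a = min 0 v - e/2"
  define b where "b = max 0 v + e/2"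
  have ep: "e > 0" using e0 e1 by (simp add: e_def)
  have aJ: "a \<in> J"
  proof (cases "0 \<le> v")
    case True then have "a \<in> ball 0 e0" using ep by (auto simp: a_def e_def dist_real_def)
    then show ?thesis using e0 by blast
  next
    case False then have "a \<in> ball v e1" using ep by (auto simp: a_def e_def dist_real_def)
    then show ?thesis using e1 by blast
  qed
  have bJ: "b \<in> J"
  proof (cases "0 \<le> v")
    case True then have "b \<in> ball v e1" using ep by (auto simp: b_def e_def dist_real_def)
    then show ?thesis using e1 by blast
  next
    case False then have "b \<in> ball 0 e0" using ep by (auto simp: b_def e_def dist_real_def)
    then show ?thesis using e0 by blast
  qed
  have sub: "{a..b} \<subseteq> J"
  proof
    fix y assume "y \<in> {a..b}"
    then show "y \<in> J" using J(2)[unfolded is_interval_1, rule_format, OF aJ bJ, of y] by simp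
  qed
  have cab: "continuous_on {a..b} \<tau>" by (rule continuous_on_subset[OF c sub])
  have ab1: "a < min 0 v" "max 0 v < b" using ep unfolding a_def b_def by linarith+
  have vab: "v \<in> {a<..<b}" "0 \<in> {a<..<b}" using ab1 by (simp_all add: min_def max_def split: if_splits)
  have "((\<lambda>w. integral {a..w} \<tau>) has_real_derivative \<tau> v) (at v within {a..b})"
    using integral_has_real_derivative[OF cab] vab by auto
  moreover have "at v within {a..b} = at v"
    using vab by (intro at_within_interior) simp
  ultimately have d0: "((\<lambda>w. integral {a..w} \<tau>) has_real_derivative \<tau> v) (at v)"
    by simp
  have d1: "((\<lambda>w. integral {a..w} \<tau> - integral {a..0} \<tau>) has_real_derivative \<tau> v - 0) (at v)"
    by (rule DERIV_diff[OF d0 DERIV_const])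
  have int: "\<tau> integrable_on {a..b}" using cab integrable_continuous_real by blast
  show ?thesis
  proof (rule has_field_derivative_transform_within_open[OF d1[simplified] _ vab(1)])
    fix w assume w: "w \<in> {a<..<b}"
    show "integral {a..w} \<tau> - integral {a..0} \<tau> = oint 0 w \<tau>"
    proof (cases "0 \<le> w")
      case True
      have "\<tau> integrable_on {a..w}" using int w integrable_subinterval_real[where f=\<tau> and a=a and b=b and c=a and d=w] by auto
      then have "integral {a..0} \<tau> + integral {0..w} \<tau> = integral {a..w} \<tau>"
        using True vab Henstock_Kurzweil_Integration.integral_combine[where f=\<tau> and a=a and c=0 and b=w] by auto
      then show ?thesis using True by (simp add: oint_def)
    next
      case False
      have "\<tau> integrable_on {a..0}" using int vab integrable_subinterval_real[where f=\<tau> and a=a and b=b and c=a and d=0] by auto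
      then have "integral {a..w} \<tau> + integral {w..0} \<tau> = integral {a..0} \<tau>"
        using False w Henstock_Kurzweil_Integration.integral_combine[where f=\<tau> and a=a and c=w and b=0] by auto
      then show ?thesis using False by (simp add: oint_def)
    qed
  qed simp
qed


theorem lemma2p1:
  fixes x t n b :: "real \<Rightarrow> real^3"
    and \<kappa> \<tau> \<theta> :: "real \<Rightarrow> real"
    and e1 e2 :: "real \<Rightarrow> real^3"
    and lam mu lam' mu' lam'' mu'' :: "real \<Rightarrow> real"
    and J1 J2 :: "real set"
    and Z l :: "real \<Rightarrow> real \<Rightarrow> real^3"
  assumes J2: "open J2" "is_interval J2" "0 \<in> J2"
    and J1: "open J1" "is_interval J1" "0 \<in> J1"
    and tangent: "\<forall>v\<in>J2. (x has_vector_derivative t v) (at v)"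
    and arclength: "\<forall>v\<in>J2. norm (t v) = 1"
    and frenet1: "\<forall>v\<in>J2. (t has_vector_derivative (\<kappa> v *\<^sub>R n v)) (at v)"
    and curv_pos: "\<forall>v\<in>J2. \<kappa> v > 0"
    and normal_unit: "\<forall>v\<in>J2. norm (n v) = 1"
    and binormal: "\<forall>v\<in>J2. b v = cross3 (t v) (n v)"
    and torsion: "\<forall>v\<in>J2. (b has_vector_derivative (- \<tau> v *\<^sub>R n v)) (at v)"
    and tau_cont: "continuous_on J2 \<tau>"
    and lam_d: "\<forall>u\<in>J1. (lam has_real_derivative lam' u) (at u)"
    and mu_d: "\<forall>u\<in>J1. (mu has_real_derivative mu' u) (at u)"
    and lam_dd: "\<forall>u\<in>J1. (lam' has_real_derivative lam'' u) (at u)"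
    and mu_dd: "\<forall>u\<in>J1. (mu' has_real_derivative mu'' u) (at u)"
    and c1_arclength: "\<forall>u\<in>J1. (lam' u)\<^sup>2 + (mu' u)\<^sup>2 = 1"
    and init: "lam 0 = 0" "mu 0 = 0" "lam' 0 = 1" "mu' 0 = 0"
    and c1_curv: "\<forall>u\<in>J1. lam' u * mu'' u - lam'' u * mu' u \<noteq> 0"
    and theta_def: "\<theta> = (\<lambda>v. - oint 0 v \<tau>)"
    and e1_def: "e1 = (\<lambda>v. cos (\<theta> v) *\<^sub>R n v + sin (\<theta> v) *\<^sub>R b v)"
    and e2_def: "e2 = (\<lambda>v. - sin (\<theta> v) *\<^sub>R n v + cos (\<theta> v) *\<^sub>R b v)"
    and Z_def: "Z = (\<lambda>u v. x v + lam u *\<^sub>R e1 v + mu u *\<^sub>R e2 v)"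
    and l_def: "l = (\<lambda>u v. - mu' u *\<^sub>R e1 v + lam' u *\<^sub>R e2 v)"
  shows "\<forall>u\<in>J1. \<forall>v\<in>J2.
           lam u * cos (\<theta> v) - mu u * sin (\<theta> v) \<noteq> 1 / \<kappa> v \<longrightarrow>
             curvature_line_u Z l u v \<and> curvature_line_v Z l u v \<and> geodesic_line_u Z l u v"
proof (intro ballI impI)
  fix u v assume u: "u \<in> J1" and v: "v \<in> J2"
    and nd: "lam u * cos (\<theta> v) - mu u * sin (\<theta> v) \<noteq> 1 / \<kappa> v"
  have tn: "t w \<bullet> n w = 0" if w: "w \<in> J2" for w
  proof -
    have d: "((\<lambda>s. t s \<bullet> t s) has_real_derivative
               (t w \<bullet> (\<kappa> w *\<^sub>R n w) + (\<kappa> w *\<^sub>R n w) \<bullet> t w)) (at w)"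
      unfolding has_real_derivative_iff_has_vector_derivative
      by (rule bounded_bilinear.has_vector_derivative[OF bounded_bilinear_inner])
         (use frenet1 w in auto)
    have "t w \<bullet> (\<kappa> w *\<^sub>R n w) + (\<kappa> w *\<^sub>R n w) \<bullet> t w = 0"
    proof (rule deriv_const_open[OF d J2(1) w])
      fix s assume "s \<in> J2"
      then show "t s \<bullet> t s = 1" using arclength by (simp add: dot_square_norm)
    qed
    then have "2 * \<kappa> w * (t w \<bullet> n w) = 0" by (simp add: inner_commute algebra_simps)
    then show ?thesis using curv_pos w by force
  qed
  have n_eq: "n w = cross3 (b w) (t w)" if w: "w \<in> J2" for w
  proof -
    have "cross3 (b w) (t w) = (t w \<bullet> t w) *\<^sub>R n w - (n w \<bullet> t w) *\<^sub>R t w"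
      using binormal w cross_cross_l by simp
    also have "\<dots> = n w" using tn[OF w] arclength w by (simp add: dot_square_norm inner_commute)
    finally show ?thesis by simp
  qed
  have dn: "(n has_vector_derivative (\<tau> v *\<^sub>R b v - \<kappa> v *\<^sub>R t v)) (at v)"
  proof -
    have "((\<lambda>s. cross3 (b s) (t s)) has_vector_derivative
             (cross3 (b v) (\<kappa> v *\<^sub>R n v) + cross3 (- \<tau> v *\<^sub>R n v) (t v))) (at v)"
      by (rule bounded_bilinear.has_vector_derivative[OF bb_cross]) (use frenet1 torsion v in auto)
    moreover have "cross3 (b v) (\<kappa> v *\<^sub>R n v) + cross3 (- \<tau> v *\<^sub>R n v) (t v)
                   = \<tau> v *\<^sub>R b v - \<kappa> v *\<^sub>R t v"
    proof -
      have "cross3 (b v) (n v) = - t v"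
        using binormal v cross_cross_l[of "t v" "n v" "n v"] tn[OF v] normal_unit
        by (simp add: dot_square_norm inner_commute)
      moreover have "cross3 (n v) (t v) = - b v" using binormal v cross_skew by metis
      ultimately show ?thesis by (simp add: cross_mult_left cross_mult_right)
    qed
    ultimately have "((\<lambda>s. cross3 (b s) (t s)) has_vector_derivative
             (\<tau> v *\<^sub>R b v - \<kappa> v *\<^sub>R t v)) (at v)" by simp
    then show ?thesis
      by (rule has_vector_derivative_transform_within_open[OF _ J2(1) v]) (simp add: n_eq)
  qed
  have dth: "(\<theta> has_real_derivative - \<tau> v) (at v)"
    unfolding theta_def by (rule DERIV_minus[OF oint_deriv[OF J2 tau_cont v]])
  have dc: "((\<lambda>w. cos (\<theta> w)) has_real_derivative - sin (\<theta> v) * - \<tau> v) (at v)"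
    by (rule DERIV_fun_cos[OF dth])
  have ds: "((\<lambda>w. sin (\<theta> w)) has_real_derivative cos (\<theta> v) * - \<tau> v) (at v)"
    by (rule DERIV_fun_sin[OF dth])
  have db: "(b has_vector_derivative (- \<tau> v *\<^sub>R n v)) (at v)" using torsion v by auto
  have de1: "(e1 has_vector_derivative (- (\<kappa> v * cos (\<theta> v)) *\<^sub>R t v)) (at v)"
  proof -
    have "((\<lambda>w. cos (\<theta> w) *\<^sub>R n w + sin (\<theta> w) *\<^sub>R b w) has_vector_derivative
      (cos (\<theta> v) *\<^sub>R (\<tau> v *\<^sub>R b v - \<kappa> v *\<^sub>R t v) + (- sin (\<theta> v) * - \<tau> v) *\<^sub>R n v
       + (sin (\<theta> v) *\<^sub>R (- \<tau> v *\<^sub>R n v) + (cos (\<theta> v) * - \<tau> v) *\<^sub>R b v))) (at v)"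
      by (intro has_vector_derivative_add has_vector_derivative_scaleR dc ds dn db)
    moreover have "cos (\<theta> v) *\<^sub>R (\<tau> v *\<^sub>R b v - \<kappa> v *\<^sub>R t v) + (- sin (\<theta> v) * - \<tau> v) *\<^sub>R n v
       + (sin (\<theta> v) *\<^sub>R (- \<tau> v *\<^sub>R n v) + (cos (\<theta> v) * - \<tau> v) *\<^sub>R b v)
       = (- (\<kappa> v * cos (\<theta> v))) *\<^sub>R t v"
      by (simp add: algebra_simps)
    ultimately show ?thesis unfolding e1_def by simp
  qed
  have de2: "(e2 has_vector_derivative (\<kappa> v * sin (\<theta> v)) *\<^sub>R t v) (at v)"
  proof -
    have "((\<lambda>w. - sin (\<theta> w) *\<^sub>R n w + cos (\<theta> w) *\<^sub>R b w) has_vector_derivative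
      (- sin (\<theta> v) *\<^sub>R (\<tau> v *\<^sub>R b v - \<kappa> v *\<^sub>R t v) + (- (cos (\<theta> v) * - \<tau> v)) *\<^sub>R n v
       + (cos (\<theta> v) *\<^sub>R (- \<tau> v *\<^sub>R n v) + (- sin (\<theta> v) * - \<tau> v) *\<^sub>R b v))) (at v)"
      by (intro has_vector_derivative_add has_vector_derivative_scaleR DERIV_minus dc ds dn db)
    moreover have "- sin (\<theta> v) *\<^sub>R (\<tau> v *\<^sub>R b v - \<kappa> v *\<^sub>R t v) + (- (cos (\<theta> v) * - \<tau> v)) *\<^sub>R n v
       + (cos (\<theta> v) *\<^sub>R (- \<tau> v *\<^sub>R n v) + (- sin (\<theta> v) * - \<tau> v) *\<^sub>R b v)
       = (\<kappa> v * sin (\<theta> v)) *\<^sub>R t v"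
      by (simp add: algebra_simps)
    ultimately show ?thesis unfolding e2_def by simp
  qed
  have dx: "(x has_vector_derivative t v) (at v)" using tangent v by auto
  define cZ where "cZ = 1 - lam u * \<kappa> v * cos (\<theta> v) + mu u * \<kappa> v * sin (\<theta> v)"
  define cN where "cN = mu' u * \<kappa> v * cos (\<theta> v) + lam' u * \<kappa> v * sin (\<theta> v)"
  have cZ0: "cZ \<noteq> 0"
  proof
    assume "cZ = 0"
    then have "\<kappa> v * (lam u * cos (\<theta> v) - mu u * sin (\<theta> v)) = 1"
      unfolding cZ_def by (simp add: algebra_simps)
    moreover have kpos: "\<kappa> v > 0" using curv_pos v by auto
    ultimately have "lam u * cos (\<theta> v) - mu u * sin (\<theta> v) = 1 / \<kappa> v"
      by (simp add: eq_divide_eq mult.commute)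
    with nd show False by simp
  qed
  have dZv: "((\<lambda>s. Z u s) has_vector_derivative cZ *\<^sub>R t v) (at v)"
  proof -
    have "((\<lambda>s. x s + lam u *\<^sub>R e1 s + mu u *\<^sub>R e2 s) has_vector_derivative
       (t v + lam u *\<^sub>R ((- (\<kappa> v * cos (\<theta> v))) *\<^sub>R t v) + mu u *\<^sub>R ((\<kappa> v * sin (\<theta> v)) *\<^sub>R t v))) (at v)"
      by (intro has_vector_derivative_add hvd_cmul dx de1 de2)
    moreover have "t v + lam u *\<^sub>R ((- (\<kappa> v * cos (\<theta> v))) *\<^sub>R t v) + mu u *\<^sub>R ((\<kappa> v * sin (\<theta> v)) *\<^sub>R t v)
      = cZ *\<^sub>R t v" unfolding cZ_def by (simp add: algebra_simps)
    ultimately show ?thesis unfolding Z_def by simp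
  qed
  have dlv: "((\<lambda>s. l u s) has_vector_derivative cN *\<^sub>R t v) (at v)"
  proof -
    have "((\<lambda>s. - mu' u *\<^sub>R e1 s + lam' u *\<^sub>R e2 s) has_vector_derivative
       (- mu' u *\<^sub>R ((- (\<kappa> v * cos (\<theta> v))) *\<^sub>R t v) + lam' u *\<^sub>R ((\<kappa> v * sin (\<theta> v)) *\<^sub>R t v))) (at v)"
      by (intro has_vector_derivative_add hvd_cmul de1 de2)
    moreover have "- mu' u *\<^sub>R ((- (\<kappa> v * cos (\<theta> v))) *\<^sub>R t v) + lam' u *\<^sub>R ((\<kappa> v * sin (\<theta> v)) *\<^sub>R t v)
      = cN *\<^sub>R t v" unfolding cN_def by (simp add: algebra_simps)
    ultimately show ?thesis unfolding l_def by simp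
  qed
  have cv: "curvature_line_v Z l u v"
    unfolding curvature_line_v_def
  proof (intro exI conjI)
    show "((\<lambda>s. Z u s) has_vector_derivative cZ *\<^sub>R t v) (at v)" by (rule dZv)
    show "((\<lambda>s. l u s) has_vector_derivative cN *\<^sub>R t v) (at v)" by (rule dlv)
    show "cN *\<^sub>R t v = (cN / cZ) *\<^sub>R (cZ *\<^sub>R t v)" using cZ0 by simp
  qed
  have orth: "lam' u * lam'' u + mu' u * mu'' u = 0"
  proof -
    have d: "((\<lambda>s. (lam' s)\<^sup>2 + (mu' s)\<^sup>2) has_real_derivative
              (2 * lam' u * lam'' u + 2 * mu' u * mu'' u)) (at u)"
      using lam_dd mu_dd u by (auto intro!: derivative_eq_intros)
    have "2 * lam' u * lam'' u + 2 * mu' u * mu'' u = 0"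
      by (rule deriv_const_open[OF d J1(1) u]) (use c1_arclength in auto)
    then show ?thesis by simp
  qed
  define c where "c = lam' u * mu'' u - lam'' u * mu' u"
  have key: "- mu'' u = - c * lam' u \<and> lam'' u = - c * mu' u"
  proof -
    have one: "(lam' u)\<^sup>2 + (mu' u)\<^sup>2 = 1" using c1_arclength u by auto
    have i1: "- mu'' u * ((lam' u)\<^sup>2 + (mu' u)\<^sup>2) - (- c * lam' u)
              = - mu' u * (lam' u * lam'' u + mu' u * mu'' u)"
      unfolding c_def power2_eq_square by (simp add: algebra_simps)
    have i2: "lam'' u * ((lam' u)\<^sup>2 + (mu' u)\<^sup>2) - (- c * mu' u)
              = lam' u * (lam' u * lam'' u + mu' u * mu'' u)"
      unfolding c_def power2_eq_square by (simp add: algebra_simps)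
    show ?thesis using i1 i2 one orth by simp
  qed
  have dZu: "((\<lambda>s. Z s v) has_vector_derivative (lam' u *\<^sub>R e1 v + mu' u *\<^sub>R e2 v)) (at u)"
  proof -
    have "((\<lambda>s. x v + lam s *\<^sub>R e1 v + mu s *\<^sub>R e2 v) has_vector_derivative
        (0 + (lam u *\<^sub>R 0 + lam' u *\<^sub>R e1 v) + (mu u *\<^sub>R 0 + mu' u *\<^sub>R e2 v))) (at u)"
      using lam_d mu_d u
      by (intro has_vector_derivative_add has_vector_derivative_scaleR has_vector_derivative_const) auto
    then show ?thesis unfolding Z_def by simp
  qed
  have dlu: "((\<lambda>s. l s v) has_vector_derivative (- mu'' u *\<^sub>R e1 v + lam'' u *\<^sub>R e2 v)) (at u)"
  proof -
    have "((\<lambda>s. - mu' s *\<^sub>R e1 v + lam' s *\<^sub>R e2 v) has_vector_derivative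
        ((- mu' u *\<^sub>R 0 + (- mu'' u) *\<^sub>R e1 v) + (lam' u *\<^sub>R 0 + lam'' u *\<^sub>R e2 v))) (at u)"
      using lam_dd mu_dd u
      by (intro has_vector_derivative_add has_vector_derivative_scaleR has_vector_derivative_const DERIV_minus) auto
    then show ?thesis unfolding l_def by simp
  qed
  have cu: "curvature_line_u Z l u v"
    unfolding curvature_line_u_def
  proof (intro exI conjI)
    show "((\<lambda>s. Z s v) has_vector_derivative (lam' u *\<^sub>R e1 v + mu' u *\<^sub>R e2 v)) (at u)" by (rule dZu)
    show "((\<lambda>s. l s v) has_vector_derivative (- mu'' u *\<^sub>R e1 v + lam'' u *\<^sub>R e2 v)) (at u)" by (rule dlu)
    show "- mu'' u *\<^sub>R e1 v + lam'' u *\<^sub>R e2 v = (- c) *\<^sub>R (lam' u *\<^sub>R e1 v + mu' u *\<^sub>R e2 v)"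
      using key by (simp add: algebra_simps)
  qed
  have gu: "geodesic_line_u Z l u v"
    unfolding geodesic_line_u_def
  proof (intro exI conjI)
    show "\<forall>\<^sub>F s in nhds u. ((\<lambda>r. Z r v) has_vector_derivative
              (\<lambda>s. lam' s *\<^sub>R e1 v + mu' s *\<^sub>R e2 v) s) (at s)"
      unfolding eventually_nhds
    proof (intro exI conjI ballI)
      show "open J1" "u \<in> J1" using J1 u by auto
      fix s assume s: "s \<in> J1"
      have "((\<lambda>r. x v + lam r *\<^sub>R e1 v + mu r *\<^sub>R e2 v) has_vector_derivative
        (0 + (lam s *\<^sub>R 0 + lam' s *\<^sub>R e1 v) + (mu s *\<^sub>R 0 + mu' s *\<^sub>R e2 v))) (at s)"
        using lam_d mu_d s
        by (intro has_vector_derivative_add has_vector_derivative_scaleR has_vector_derivative_const) auto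
      then show "((\<lambda>r. Z r v) has_vector_derivative
              (\<lambda>s. lam' s *\<^sub>R e1 v + mu' s *\<^sub>R e2 v) s) (at s)" unfolding Z_def by simp
    qed
    have "((\<lambda>s. lam' s *\<^sub>R e1 v + mu' s *\<^sub>R e2 v) has_vector_derivative
        ((lam' u *\<^sub>R 0 + lam'' u *\<^sub>R e1 v) + (mu' u *\<^sub>R 0 + mu'' u *\<^sub>R e2 v))) (at u)"
      using lam_dd mu_dd u
      by (intro has_vector_derivative_add has_vector_derivative_scaleR has_vector_derivative_const) auto
    then show "((\<lambda>s. lam' s *\<^sub>R e1 v + mu' s *\<^sub>R e2 v) has_vector_derivative
        (lam'' u *\<^sub>R e1 v + mu'' u *\<^sub>R e2 v)) (at u)" by simp
    show "cross3 (l u v) ((\<lambda>s. lam' s *\<^sub>R e1 v + mu' s *\<^sub>R e2 v) u) \<bullet>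
          (lam'' u *\<^sub>R e1 v + mu'' u *\<^sub>R e2 v) = 0"
      unfolding l_def by (simp only: triple0)
  qed
  show "curvature_line_u Z l u v \<and> curvature_line_v Z l u v \<and> geodesic_line_u Z l u v"
    using cu cv gu by blast
qed

end
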